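(* Let $\epsilon>0$, $\delta\ge0$, $n\ge1$, $\theta_0\in(0,1)$, set $b=e^{-\epsilon}$ and $q=\frac{2\delta b}{1-b+2\delta b}$, let $X\sim\mathrm{Binom}(n,\theta)$ with $\theta$ unknown, and let $Z\mid X\sim\mathrm{Tulap}(X,b,q)$. Define $p(\theta_0,Z):=P(X'+N\ge Z\mid Z)$, where the probability is over independent $X'\sim\mathrm{Binom}(n,\theta_0)$ and $N\sim\mathrm{Tulap}(0,b,q)$ (independent of $Z$). Then: (1) $p(\theta_0,Z)$ is a $p$-value for $H_0:\theta\le\theta_0$ versus $H_1:\theta>\theta_0$; (2) for every $0<\alpha<1$, the test $\phi^*_x=P_{Z\mid X\sim\mathrm{Tulap}(X,b,q)}\big(p(\theta_0,Z)\le\alpha\mid X=x\big)$ is the uniformly most powerful level-$\alpha$ test for $H_0:\theta\le\theta_0$ versus $H_1:\theta>\theta_0$ among $\mathscr D^n_{\epsilon,\delta}$; (3) $p(\theta_0,Z)=\sum_{x=0}^n F_N(x-Z)\binom nx\theta_0^x(1-\theta_0)^{n-x}$, where $F_N$ is the cdf of $\mathrm{Tulap}(0,b,q)$.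
   Context: A $p$-value for $H_0:\theta\in\Theta_0$ based on data $Z$ is a random variable $p(Z)\in[0,1]$ such that for every $\theta\in\Theta_0$ and every $0<\alpha<1$, $P_\theta(p(Z)\le\alpha)\le\alpha$. Nearest integer function: $[t]$ is the integer nearest to $t$, with $[z+1/2]$ ($z\in\mathbb{Z}$) defined as the nearest even integer. Tulap distribution: for $m\in\mathbb{R}$, $b\in(0,1)$, $q\in[0,1)$, $N_0\sim\mathrm{Tulap}(m,b,0)$ has cdf $F_{N_0}(x)=\frac{b^{-[x-m]}}{1+b}\big(b+(x-m-[x-m]+\tfrac12)(1-b)\big)$ for $x\leq [m]$ and $F_{N_0}(x)=1-\frac{b^{[x-m]}}{1+b}\big(b+([x-m]-(x-m)+\tfrac12)(1-b)\big)$ for $x>[m]$; and $N\sim \mathrm{Tulap}(m,b,q)$ has cdf $F_N(x)=\frac{F_{N_0}(x)-q/2}{1-q}\,I\{q/2\leq F_{N_0}(x)\leq 1-q/2\}+I\{F_{N_0}(x)>1-q/2\}$. A test is a function $\phi:\{0,\dots,n\}\to[0,1]$ (probability of rejecting when $X=x$). $\mathscr D^n_{\epsilon,\delta}$ is the set of tests $\phi$ such that for all $x\in\{0,\dots,n-1\}$: $\phi_x\le e^\epsilon\phi_{x+1}+\delta$, $\phi_{x+1}\le e^\epsilon\phi_x+\delta$, $1-\phi_x\le e^\epsilon(1-\phi_{x+1})+\delta$, $1-\phi_{x+1}\le e^\epsilon(1-\phi_x)+\delta$. A test $\phi^*\in\Phi$ is uniformly most powerful at level $\alpha$ among $\Phi$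 if $\sup_{\theta\in\Theta_0}\mathbb{E}_\theta\phi^*\le\alpha$ and for every $\phi\in\Phi$ with $\sup_{\theta\in\Theta_0}\mathbb{E}_\theta\phi\le\alpha$, $\mathbb{E}_\theta\phi^*\ge\mathbb{E}_\theta\phi$ for all $\theta$ in the alternative. *)

theory Defs
  imports "HOL-Probability.Probability"
begin

definition nint :: "real \<Rightarrow> int" where
  "nint t = (let k = \<lfloor>t\<rfloor>; r = t - of_int k in
     if r < 1/2 then k else if r > 1/2 then k + 1
     else (if even k then k else k + 1))"

definition tulap0_cdf :: "real \<Rightarrow> real \<Rightarrow> real \<Rightarrow> real" where
  "tulap0_cdf m b x =
     (if x \<le> of_int (nint m) then
        b powr (- of_int (nint (x - m))) / (1 + b) *
          (b + (x - m - of_int (nint (x - m)) + 1/2) * (1 - b))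
      else
        1 - b powr (of_int (nint (x - m))) / (1 + b) *
          (b + (of_int (nint (x - m)) - (x - m) + 1/2) * (1 - b)))"

definition tulap_cdf :: "real \<Rightarrow> real \<Rightarrow> real \<Rightarrow> real \<Rightarrow> real" where
  "tulap_cdf m b q x =
     (let F0 = tulap0_cdf m b x in
        (if q/2 \<le> F0 \<and> F0 \<le> 1 - q/2 then (F0 - q/2) / (1 - q) else 0)
        + (if F0 > 1 - q/2 then 1 else 0))"

definition tulap_measure :: "real \<Rightarrow> real \<Rightarrow> real \<Rightarrow> real measure" where
  "tulap_measure m b q = interval_measure (tulap_cdf m b q)"

definition Z_prob :: "nat \<Rightarrow> real \<Rightarrow> real \<Rightarrow> real \<Rightarrow> real set \<Rightarrow> real" where
  "Z_prob n \<theta> b q A =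
     (\<Sum>x\<le>n. pmf (binomial_pmf n \<theta>) x * measure (tulap_measure (real x) b q) A)"

definition tulap_pvalue :: "nat \<Rightarrow> real \<Rightarrow> real \<Rightarrow> real \<Rightarrow> real \<Rightarrow> real" where
  "tulap_pvalue n \<theta>0 b q z =
     measure (measure_pmf (binomial_pmf n \<theta>0) \<Otimes>\<^sub>M tulap_measure 0 b q)
       {(x, t). real x + t \<ge> z}"

definition is_pvalue :: "nat \<Rightarrow> real \<Rightarrow> real \<Rightarrow> real set \<Rightarrow> (real \<Rightarrow> real) \<Rightarrow> bool" where
  "is_pvalue n b q \<Theta>0 p \<longleftrightarrow>
     (\<forall>z. 0 \<le> p z \<and> p z \<le> 1) \<and>
     (\<forall>\<theta>\<in>\<Theta>0. \<forall>\<alpha>. 0 < \<alpha> \<and> \<alpha> < 1 \<longrightarrow> Z_prob n \<theta> b q {z. p z \<le> \<alpha>} \<le> \<alpha>)"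

definition is_test :: "nat \<Rightarrow> (nat \<Rightarrow> real) \<Rightarrow> bool" where
  "is_test n \<phi> \<longleftrightarrow> (\<forall>x\<le>n. 0 \<le> \<phi> x \<and> \<phi> x \<le> 1)"

definition power :: "nat \<Rightarrow> real \<Rightarrow> (nat \<Rightarrow> real) \<Rightarrow> real" where
  "power n \<theta> \<phi> = (\<Sum>x\<le>n. pmf (binomial_pmf n \<theta>) x * \<phi> x)"

definition DP_tests :: "nat \<Rightarrow> real \<Rightarrow> real \<Rightarrow> (nat \<Rightarrow> real) set" where
  "DP_tests n \<epsilon> \<delta> = {\<phi>. is_test n \<phi> \<and> (\<forall>x<n.
       \<phi> x \<le> exp \<epsilon> * \<phi> (x+1) + \<delta> \<and>
       \<phi> (x+1) \<le> exp \<epsilon> * \<phi> x + \<delta> \<and>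
       1 - \<phi> x \<le> exp \<epsilon> * (1 - \<phi> (x+1)) + \<delta> \<and>
       1 - \<phi> (x+1) \<le> exp \<epsilon> * (1 - \<phi> x) + \<delta>)}"

definition is_UMP :: "nat \<Rightarrow> real set \<Rightarrow> real set \<Rightarrow> real \<Rightarrow> (nat \<Rightarrow> real) set \<Rightarrow> (nat \<Rightarrow> real) \<Rightarrow> bool" where
  "is_UMP n \<Theta>0 \<Theta>1 \<alpha> \<Phi> \<phi>s \<longleftrightarrow>
     \<phi>s \<in> \<Phi> \<and> (\<forall>\<theta>\<in>\<Theta>0. power n \<theta> \<phi>s \<le> \<alpha>) \<and>
     (\<forall>\<phi>\<in>\<Phi>. (\<forall>\<theta>\<in>\<Theta>0. power n \<theta> \<phi> \<le> \<alpha>) \<longrightarrow>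
        (\<forall>\<theta>\<in>\<Theta>1. power n \<theta> \<phi>s \<ge> power n \<theta> \<phi>))"

end

theory Submission
  imports Defs "HOL-Real_Asymp.Real_Asymp"
begin

lemma nint_of_int[simp]: "nint (of_int k) = k"
  by (simp add: nint_def)

lemma nint_zero[simp]: "nint 0 = 0"
  by (simp add: nint_def)

lemma nint_bounds: "of_int (nint t) - 1/2 \<le> t \<and> t \<le> of_int (nint t) + 1/2"
proof -
  define k where "k = \<lfloor>t\<rfloor>"
  have k: "of_int k \<le> t" "t < of_int k + 1" unfolding k_def by linarith+
  show ?thesis unfolding nint_def Let_def k_def[symmetric]
    using k by (auto split: if_splits)
qed

lemma powr_plus1: "b > 0 \<Longrightarrow> b powr (x + 1) = b powr x * (b::real)"
  using powr_add[of b x 1] by simp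

definition hfun :: "real \<Rightarrow> real \<Rightarrow> real" where
  "hfun b w = b powr (- of_int \<lfloor>w\<rfloor>) / (1+b) * (b + (w - of_int \<lfloor>w\<rfloor>) * (1-b))"

lemma hk_eq:
  assumes b: "b > 0" and k: "of_int k \<le> w" "w \<le> of_int k + 1"
  shows "b powr (- of_int k) / (1+b) * (b + (w - of_int k) * (1-b)) = hfun b w"
proof (cases "w < of_int k + 1")
  case True
  then have "\<lfloor>w\<rfloor> = k" using k by linarith
  then show ?thesis by (simp add: hfun_def)
next
  case False
  then have w: "w = of_int k + 1" using k by simp
  then have fl: "\<lfloor>w\<rfloor> = k + 1" by simp
  have e: "- of_int k = (- of_int (k+1) + 1::real)" by simp
  have "b powr (- of_int (k+1)) * b = b powr (- of_int k)"
    using powr_plus1[OF b, of "- of_int k - 1"] by simp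
  then show ?thesis unfolding hfun_def fl w by (simp add: algebra_simps)
qed

lemma G_eq:
  assumes b: "b > 0"
  shows "tulap0_cdf 0 b x = (if x \<le> 0 then hfun b (x + 1/2) else 1 - hfun b (1/2 - x))"
proof -
  define k where "k = nint x"
  have kb: "of_int k - 1/2 \<le> x" "x \<le> of_int k + 1/2" using nint_bounds[of x] k_def by auto
  have 1: "b powr (- of_int k) / (1+b) * (b + (x - of_int k + 1/2) * (1-b)) = hfun b (x + 1/2)"
    using hk_eq[OF b, of k "x + 1/2"] kb by (simp add: algebra_simps)
  have 2: "b powr (of_int k) / (1+b) * (b + (of_int k - x + 1/2) * (1-b)) = hfun b (1/2 - x)"
    using hk_eq[OF b, of "-k" "1/2 - x"] kb by (simp add: algebra_simps)
  show ?thesis unfolding tulap0_cdf_def k_def[symmetric] using 1 2 by (simp add: k_def)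
qed

lemma tulap0_shift:
  "tulap0_cdf (real j) b x = tulap0_cdf 0 b (x - real j)"
proof -
  have "nint (real j) = int j" using nint_of_int[of "int j"] by simp
  then show ?thesis unfolding tulap0_cdf_def by (simp add: algebra_simps)
qed

lemma tulap_shift:
  "tulap_cdf (real j) b q x = tulap_cdf 0 b q (x - real j)"
  unfolding tulap_cdf_def tulap0_shift[of j] ..

lemma hfun_Suc:
  assumes b: "b > 0"
  shows "hfun b (w + 1) = hfun b w / b"
proof -
  define P where "P = b powr (- of_int \<lfloor>w\<rfloor>)"
  define r where "r = w - of_int \<lfloor>w\<rfloor>"
  have e: "- of_int \<lfloor>w\<rfloor> = (- of_int (\<lfloor>w\<rfloor> + 1) + 1::real)" by simp
  have p: "b powr (- of_int (\<lfloor>w\<rfloor> + 1)) * b = P"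
    unfolding P_def using powr_plus1[OF b, of "- of_int \<lfloor>w\<rfloor> - 1"] by simp
  have "hfun b (w + 1) = b powr (- of_int (\<lfloor>w\<rfloor> + 1)) / (1+b) * (b + r * (1-b))"
    unfolding hfun_def r_def by simp
  also have "b powr (- of_int (\<lfloor>w\<rfloor> + 1)) = P / b" using p b by (simp add: field_simps)
  also have "P / b / (1+b) * (b + r * (1-b)) = hfun b w / b"
    unfolding hfun_def P_def r_def by simp
  finally show ?thesis .
qed

lemma hfun_nonneg:
  assumes b: "0 < b" "b < 1"
  shows "hfun b w \<ge> 0"
proof -
  have "w - of_int \<lfloor>w\<rfloor> \<ge> 0" by linarith
  then show ?thesis unfolding hfun_def using b by (intro mult_nonneg_nonneg divide_nonneg_pos) auto
qed

lemma hfun_upper: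
  assumes b: "0 < b" "b < 1"
  shows "hfun b w \<le> b powr (- of_int \<lfloor>w\<rfloor>)"
proof -
  have f: "w - of_int \<lfloor>w\<rfloor> \<ge> 0" "w - of_int \<lfloor>w\<rfloor> \<le> 1" by linarith+
  have "b + (w - of_int \<lfloor>w\<rfloor>) * (1-b) \<le> b + 1 * (1 - b)"
    using f b by (intro add_left_mono mult_right_mono) auto
  also have "\<dots> \<le> 1 + b" using b by simp
  finally have *: "(b + (w - of_int \<lfloor>w\<rfloor>) * (1-b)) / (1+b) \<le> 1" using b by simp
  have "hfun b w = b powr (- of_int \<lfloor>w\<rfloor>) * ((b + (w - of_int \<lfloor>w\<rfloor>) * (1-b)) / (1+b))"
    unfolding hfun_def by simp
  also have "\<dots> \<le> b powr (- of_int \<lfloor>w\<rfloor>) * 1"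
    using * by (intro mult_left_mono) auto
  finally show ?thesis by simp
qed

lemma hfun_mono:
  assumes b: "0 < b" "b < 1" and le: "w1 \<le> w2"
  shows "hfun b w1 \<le> hfun b w2"
proof -
  define m1 where "m1 = \<lfloor>w1\<rfloor>"
  define m2 where "m2 = \<lfloor>w2\<rfloor>"
  have m: "m1 \<le> m2" unfolding m1_def m2_def using le by (simp add: floor_mono)
  have w1: "of_int m1 \<le> w1" "w1 < of_int m1 + 1" unfolding m1_def by linarith+
  have w2: "of_int m2 \<le> w2" "w2 < of_int m2 + 1" unfolding m2_def by linarith+
  have pos: "b powr (- of_int m) / (1+b) > 0" for m :: int using b by simp
  show ?thesis
  proof (cases "m1 = m2")
    case True
    have "hfun b w1 = b powr (- of_int m1) / (1+b) * (b + (w1 - of_int m1) * (1-b))"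
      unfolding hfun_def m1_def ..
    also have "\<dots> \<le> b powr (- of_int m1) / (1+b) * (b + (w2 - of_int m1) * (1-b))"
      using pos[of m1] le b by (intro mult_left_mono add_left_mono mult_right_mono) auto
    also have "\<dots> = hfun b w2" unfolding hfun_def m2_def[symmetric] True ..
    finally show ?thesis .
  next
    case False
    then have m': "m1 + 1 \<le> m2" using m by simp
    have "hfun b w1 = b powr (- of_int m1) / (1+b) * (b + (w1 - of_int m1) * (1-b))"
      unfolding hfun_def m1_def ..
    also have "\<dots> \<le> b powr (- of_int m1) / (1+b) * (b + 1 * (1-b))"
      using pos[of m1] w1 b by (intro mult_left_mono add_left_mono mult_right_mono) auto
    also have "\<dots> = b powr (- of_int m1) / (1+b)" by simp
    also have "\<dots> \<le> b powr (- of_int (m2 - 1)) / (1+b)"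
      using b m' by (intro divide_right_mono powr_mono') auto
    also have "b powr (- of_int (m2 - 1)) = b powr (- of_int m2) * b"
        using powr_plus1[OF b(1), of "- of_int m2"] by simp
    also have "b powr (- of_int m2) * b / (1+b) = b powr (- of_int m2) / (1+b) * (b + 0 * (1-b))"
      by simp
    also have "\<dots> \<le> b powr (- of_int m2) / (1+b) * (b + (w2 - of_int m2) * (1-b))"
      using pos[of m2] w2 b by (intro mult_left_mono add_left_mono mult_right_mono) auto
    also have "\<dots> = hfun b w2" unfolding hfun_def m2_def ..
    finally show ?thesis .
  qed
qed

definition Hk :: "real \<Rightarrow> int \<Rightarrow> real \<Rightarrow> real" where
  "Hk b k w = b powr (- of_int k) / (1+b) * (b + (w - of_int k) * (1-b))"

lemma hfun_isCont:
  assumes b: "0 < b" "b < 1"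
  shows "isCont (hfun b) w0"
proof -
  define m where "m = \<lfloor>w0\<rfloor>"
  have w0: "of_int m \<le> w0" "w0 < of_int m + 1" unfolding m_def by linarith+
  define g where "g = (\<lambda>w. if w \<le> of_int m then Hk b (m-1) w else Hk b m w)"
  have eqm: "Hk b (m-1) (of_int m) = Hk b m (of_int m)"
  proof -
    have "b powr (- of_int m + 1) = b powr (- of_int m) * b" using powr_plus1[OF b(1)] .
    then show ?thesis unfolding Hk_def by (simp add: algebra_simps)
  qed
  have cH: "continuous_on A (Hk b k)" for A k unfolding Hk_def by (intro continuous_intros)
  have "continuous_on UNIV g" unfolding g_def
    by (rule continuous_on_cases_1) (use cH eqm in auto)
  then have cg: "isCont g w0" by (simp add: continuous_on_eq_continuous_at)
  have ev: "\<forall>\<^sub>F w in nhds w0. w \<in> {of_int m - 1 <..< of_int m + 1}"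
    by (rule eventually_nhds_in_open) (use w0 in auto)
  have "\<forall>\<^sub>F w in nhds w0. hfun b w = g w"
  proof (rule eventually_mono[OF ev])
    fix w :: real assume w: "w \<in> {of_int m - 1 <..< of_int m + 1}"
    show "hfun b w = g w"
    proof (cases "w \<le> of_int m")
      case True
      then show ?thesis unfolding g_def Hk_def using hk_eq[OF b(1), of "m-1" w] w by auto
    next
      case False
      then show ?thesis unfolding g_def Hk_def using hk_eq[OF b(1), of "m" w] w by auto
    qed
  qed
  then show ?thesis using cg isCont_cong by blast
qed

lemma hfun_lim_bot:
  assumes b: "0 < b" "b < 1"
  shows "(hfun b \<longlongrightarrow> 0) at_bot"
proof (rule tendsto_sandwich[of "\<lambda>_. 0" _ _ "\<lambda>w. b powr (-w)"])
  show "\<forall>\<^sub>F n in at_bot. 0 \<le> hfun b n" using hfun_nonneg[OF b] by simp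
  have "hfun b w \<le> b powr (-w)" for w
  proof -
    have "hfun b w \<le> b powr (- of_int \<lfloor>w\<rfloor>)" by (rule hfun_upper[OF b])
    also have "\<dots> \<le> b powr (-w)" using b by (intro powr_mono') auto
    finally show ?thesis .
  qed
  then show "\<forall>\<^sub>F n in at_bot. hfun b n \<le> b powr (-n)" by simp
  show "((\<lambda>_. 0::real) \<longlongrightarrow> 0) at_bot" by simp
  show "((\<lambda>w. b powr (-w)) \<longlongrightarrow> 0) at_bot" using b by real_asymp
qed

lemma hfun_half: "b > 0 \<Longrightarrow> hfun b (1/2) = 1/2"
  by (simp add: hfun_def field_simps)

lemma hfun_zero: assumes "b > 0" shows "hfun b 0 = b/(1+b)"
proof -
  have "b + b*b > 0" using assms by (simp add: add_pos_pos)
  then show ?thesis using assms by (simp add: hfun_def field_simps)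
qed

lemma hfun_one: assumes "b > 0" shows "hfun b 1 = 1/(1+b)"
proof -
  have "b + b*b > 0" using assms by (simp add: add_pos_pos)
  then show ?thesis using assms by (simp add: hfun_def field_simps)
qed

abbreviation G :: "real \<Rightarrow> real \<Rightarrow> real" where "G b \<equiv> tulap0_cdf 0 b"

lemma G_sym:
  assumes b: "0 < b" "b < 1"
  shows "G b (-t) = 1 - G b t"
  using b by (auto simp: G_eq hfun_half algebra_simps)

lemma G_mono:
  assumes b: "0 < b" "b < 1" and le: "s \<le> t"
  shows "G b s \<le> G b t"
proof -
  have h: "x \<le> y \<Longrightarrow> hfun b x \<le> hfun b y" for x y using hfun_mono[OF b] by blast
  show ?thesis
  proof (cases "t \<le> 0")
    case True
    then show ?thesis using le h[of "s+1/2" "t+1/2"] by (simp add: G_eq b)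
  next
    case False
    show ?thesis
    proof (cases "s \<le> 0")
      case True
      have "hfun b (s + 1/2) \<le> hfun b (1/2)" using h True by simp
      moreover have "hfun b (1/2 - t) \<le> hfun b (1/2)" using h False by simp
      ultimately show ?thesis using True False by (simp add: G_eq b hfun_half)
    next
      case False
      then show ?thesis using le h[of "1/2 - t" "1/2 - s"] \<open>\<not> t \<le> 0\<close> by (simp add: G_eq b)
    qed
  qed
qed

lemma G_cont:
  assumes b: "0 < b" "b < 1"
  shows "continuous_on UNIV (G b)"
proof -
  have c: "continuous_on A (hfun b)" for A
    using hfun_isCont[OF b] by (simp add: continuous_at_imp_continuous_on)
  have "continuous_on UNIV (\<lambda>x. if x \<le> 0 then hfun b (x + 1/2) else 1 - hfun b (1/2 - x))"
    by (rule continuous_on_cases_1)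
       (auto simp: hfun_half b intro!: continuous_intros continuous_on_compose2[OF c])
  then show ?thesis by (simp add: G_eq[OF b(1)])
qed

lemma G_lim_bot:
  assumes b: "0 < b" "b < 1"
  shows "(G b \<longlongrightarrow> 0) at_bot"
proof -
  have lim: "((\<lambda>x. hfun b (x + 1/2)) \<longlongrightarrow> 0) at_bot"
    by (rule filterlim_compose[OF hfun_lim_bot[OF b]]) real_asymp
  have ev: "\<forall>\<^sub>F x in at_bot. hfun b (x + 1/2) = G b x"
    unfolding eventually_at_bot_linorder by (rule exI[of _ 0]) (simp add: G_eq b)
  from lim show ?thesis by (rule tendsto_cong[OF ev, THEN iffD1])
qed

lemma G_lim_top:
  assumes b: "0 < b" "b < 1"
  shows "(G b \<longlongrightarrow> 1) at_top"
proof -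
  have "((\<lambda>x. G b (- x)) \<longlongrightarrow> 0) at_top"
    by (rule filterlim_compose[OF G_lim_bot[OF b]]) real_asymp
  then have "((\<lambda>x. 1 - G b (- x)) \<longlongrightarrow> 1 - 0) at_top"
    by (intro tendsto_intros)
  then show ?thesis by (simp add: G_sym[OF b])
qed

lemma G_range:
  assumes b: "0 < b" "b < 1"
  shows "0 \<le> G b t" "G b t \<le> 1"
proof -
  have h: "x \<le> y \<Longrightarrow> hfun b x \<le> hfun b y" for x y using hfun_mono[OF b] by blast
  have "hfun b x \<le> 1" if "x \<le> 1/2" for x using h[OF that] hfun_half[OF b(1)] by simp
  then show "0 \<le> G b t" "G b t \<le> 1" using hfun_nonneg[OF b] by (auto simp: G_eq b)
qed


lemma minlem:
  fixes b g :: real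
  assumes b: "0 < b" "b < 1"
  shows "g \<le> b/(1+b) \<Longrightarrow> min (g / b) (1 - b * (1 - g)) = g / b"
    and "g \<ge> b/(1+b) \<Longrightarrow> min (g / b) (1 - b * (1 - g)) = 1 - b * (1 - g)"
proof -
  have id: "g / b - (1 - b * (1 - g)) = (1 - b) * (g * (1 + b) - b) / b"
    using b by (simp add: field_simps)
  have "g \<le> b/(1+b) \<longleftrightarrow> g * (1 + b) - b \<le> 0" using b by (simp add: le_divide_eq)
  moreover have "g \<ge> b/(1+b) \<longleftrightarrow> g * (1 + b) - b \<ge> 0" using b by (simp add: divide_le_eq)
  moreover have "(1 - b) * (g * (1 + b) - b) / b \<le> 0 \<longleftrightarrow> g * (1 + b) - b \<le> 0"
    using b by (simp add: divide_le_0_iff mult_le_0_iff)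
  moreover have "(1 - b) * (g * (1 + b) - b) / b \<ge> 0 \<longleftrightarrow> g * (1 + b) - b \<ge> 0"
    using b by (simp add: zero_le_divide_iff zero_le_mult_iff)
  ultimately show "g \<le> b/(1+b) \<Longrightarrow> min (g / b) (1 - b * (1 - g)) = g / b"
    and "g \<ge> b/(1+b) \<Longrightarrow> min (g / b) (1 - b * (1 - g)) = 1 - b * (1 - g)"
    using id by (auto simp: min_def)
qed

lemma G_step:
  assumes b: "0 < b" "b < 1"
  shows "G b (t + 1) = min (G b t / b) (1 - b * (1 - G b t))"
proof -
  have h: "x \<le> y \<Longrightarrow> hfun b x \<le> hfun b y" for x y using hfun_mono[OF b] by blast
  show ?thesis
  proof (cases "t + 1 \<le> 0")
    case True
    have g1: "G b t = hfun b (t + 1/2)" using True by (simp add: G_eq b)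
    have g2: "G b (t+1) = hfun b (t + 1/2 + 1)" using True by (simp add: G_eq b algebra_simps)
    have "hfun b (t + 1/2) \<le> hfun b 0" using h True by simp
    then have "G b t \<le> b/(1+b)" using g1 hfun_zero[OF b(1)] by simp
    then have "min (G b t / b) (1 - b * (1 - G b t)) = G b t / b" by (rule minlem[OF b])
    then show ?thesis unfolding g2 hfun_Suc[OF b(1)] using g1 by simp
  next
    case t1: False
    show ?thesis
    proof (cases "t > 0")
      case True
      have g1: "G b t = 1 - hfun b (1/2 - t)" using True by (simp add: G_eq b)
      have g2: "G b (t+1) = 1 - hfun b (1/2 - (t + 1))" using True by (simp add: G_eq b)
      have hs0: "hfun b (1/2 - (t + 1) + 1) = hfun b (1/2 - (t + 1)) / b"
        by (rule hfun_Suc[OF b(1)])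
      have "1/2 - (t + 1) + 1 = 1/2 - t" by simp
      then have hs: "hfun b (1/2 - t) = hfun b (1/2 - (t + 1)) / b" using hs0 by simp
      have "hfun b (1/2 - t) \<le> hfun b 1" using h True by simp
      then have "hfun b (1/2 - t) \<le> 1/(1+b)" using hfun_one[OF b(1)] by simp
      then have "G b t \<ge> 1 - 1/(1+b)" using g1 by simp
      moreover have "1 - 1/(1+b) = b/(1+b)" using b by (simp add: field_simps)
      ultimately have "G b t \<ge> b/(1+b)" by simp
      then have "min (G b t / b) (1 - b * (1 - G b t)) = 1 - b * (1 - G b t)" by (rule minlem[OF b])
      also have "\<dots> = G b (t+1)" using g1 g2 hs b by simp
      finally show ?thesis by simp
    next
      case False
      define w where "w = t + 1/2"
      have g1: "G b t = hfun b w" using False by (simp add: G_eq b w_def)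
      have g2: "G b (t+1) = 1 - hfun b (- w)" using t1 by (simp add: G_eq b w_def algebra_simps)
      show ?thesis
      proof (cases "w \<le> 0")
        case True
        have w1: "-1 \<le> w" using t1 w_def by simp
        have a1: "hfun b w = b * (b + (w + 1) * (1-b)) / (1+b)"
          using hk_eq[OF b(1), of "-1" w] w1 True b by simp
        have a2: "hfun b (-w) = (b + (-w) * (1-b)) / (1+b)"
          using hk_eq[OF b(1), of "0" "-w"] w1 True b by simp
        have le: "G b t \<le> b/(1+b)"
        proof -
          have "(w + 1) * (1-b) \<le> 1 * (1-b)" using True b by (intro mult_right_mono) auto
          then have "b + (w + 1) * (1-b) \<le> 1" by simp
          then have "b * (b + (w + 1) * (1-b)) \<le> b * 1" using b by (intro mult_left_mono) auto
          then show ?thesis using g1 a1 b by (simp add: divide_right_mono)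
        qed
        then have "min (G b t / b) (1 - b * (1 - G b t)) = G b t / b" by (rule minlem[OF b])
        also have "G b t / b = (b + (w + 1) * (1-b)) / (1+b)" using g1 a1 b by simp
        also have "\<dots> = G b (t+1)" unfolding g2 a2 using b by (simp add: field_simps)
        finally show ?thesis by simp
      next
        case False
        have w1: "w \<le> 1/2" using \<open>\<not> 0 < t\<close> w_def by simp
        have a1: "hfun b w = (b + w * (1-b)) / (1+b)"
          using hk_eq[OF b(1), of "0" w] w1 False b by simp
        have a2': "hfun b (-w) = b powr (- of_int (-1)) / (1+b) * (b + (-w - of_int (-1)) * (1-b))"
          using hk_eq[OF b(1), of "-1" "-w"] w1 False by simp
        have "1 + b \<noteq> 0" using b by simp
        then have a2: "hfun b (-w) = b * (b + (1 - w) * (1-b)) / (1+b)"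
          unfolding a2' using b by (simp add: field_simps)
        have ge: "G b t \<ge> b/(1+b)"
        proof -
          have "0 \<le> w * (1-b)" using False b by simp
          then show ?thesis using g1 a1 b by (simp add: divide_right_mono)
        qed
        then have "min (G b t / b) (1 - b * (1 - G b t)) = 1 - b * (1 - G b t)" by (rule minlem[OF b])
        also have "\<dots> = G b (t+1)" unfolding g1 g2 a1 a2 using b by (simp add: field_simps)
        finally show ?thesis by simp
      qed
    qed
  qed
qed


definition clip :: "real \<Rightarrow> real" where "clip y = max 0 (min 1 y)"

abbreviation F :: "real \<Rightarrow> real \<Rightarrow> real \<Rightarrow> real" where "F b q \<equiv> tulap_cdf 0 b q"

lemma F_eq:
  assumes q: "0 \<le> q" "q < 1"
  shows "F b q t = clip ((G b t - q/2) / (1 - q))"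
proof -
  define g where "g = G b t"
  have "F b q t = (if q/2 \<le> g \<and> g \<le> 1 - q/2 then (g - q/2) / (1 - q) else 0) + (if g > 1 - q/2 then 1 else 0)"
    unfolding tulap_cdf_def g_def Let_def ..
  also have "\<dots> = clip ((g - q/2) / (1 - q))"
  proof -
    have "(g - q/2) / (1 - q) \<le> 1 \<longleftrightarrow> g - q/2 \<le> 1 - q" using q by (simp add: divide_le_eq)
    also have "\<dots> \<longleftrightarrow> g \<le> 1 - q/2" by linarith
    finally have "(g - q/2) / (1 - q) \<le> 1 \<longleftrightarrow> g \<le> 1 - q/2" .
    moreover have "(g - q/2) / (1 - q) \<ge> 0 \<longleftrightarrow> g \<ge> q/2" using q by (simp add: zero_le_divide_iff)
    ultimately show ?thesis unfolding clip_def using q by (auto simp: max_def min_def)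
  qed
  finally show ?thesis unfolding g_def .
qed

lemma clip_mono: "x \<le> y \<Longrightarrow> clip x \<le> clip y"
  unfolding clip_def by (auto simp: max_def min_def)

lemma clip_range: "0 \<le> clip x" "clip x \<le> 1"
  unfolding clip_def by (auto simp: max_def min_def)

lemma clip_sym: "clip (1 - x) = 1 - clip x"
  unfolding clip_def by (auto simp: max_def min_def)

lemma alg2: "b \<noteq> 0 \<Longrightarrow> (r::real) \<noteq> 0 \<Longrightarrow> (1 - b * (1 - g) - (1 - r)/2) / r = 1 - b * (1 - (g - (1 - r)/2)/r - (1 - r)*(1-b)/(2*b*r))"
  by (simp add: field_simps)

locale tul =
  fixes b q :: real
  assumes b: "0 < b" "b < 1" and q: "0 \<le> q" "q < 1"
begin

definition A :: "real \<Rightarrow> real" where "A t = (G b t - q/2) / (1 - q)"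

definition dl :: real where "dl = q * (1 - b) / (2 * b * (1 - q))"

lemma dl_nonneg: "dl \<ge> 0"
  unfolding dl_def using b q by (intro divide_nonneg_pos mult_nonneg_nonneg) auto

lemma FA: "F b q t = clip (A t)"
  using F_eq[OF q] unfolding A_def by simp

lemma F_mono: "s \<le> t \<Longrightarrow> F b q s \<le> F b q t"
  unfolding FA A_def using q G_mono[OF b]
  by (intro clip_mono divide_right_mono diff_right_mono) auto

lemma F_range: "0 \<le> F b q t" "F b q t \<le> 1"
  unfolding FA by (rule clip_range)+

lemma F_sym: "F b q (-t) = 1 - F b q t"
proof -
  have "A (-t) = 1 - A t" unfolding A_def G_sym[OF b] using q by (simp add: field_simps)
  then show ?thesis unfolding FA by (simp add: clip_sym)
qed

lemma F_cont: "continuous_on UNIV (F b q)"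
proof -
  have "continuous_on UNIV (\<lambda>t. max 0 (min 1 ((G b t - q/2) / (1 - q))))"
    using G_cont[OF b] q by (intro continuous_intros) auto
  then show ?thesis unfolding FA A_def clip_def by simp
qed

lemma F_isCont: "isCont (F b q) t"
  using F_cont by (simp add: continuous_on_eq_continuous_at)

lemma F_lim_top: "(F b q \<longlongrightarrow> 1) at_top"
proof -
  have "((\<lambda>t. max 0 (min 1 ((G b t - q/2) / (1 - q)))) \<longlongrightarrow> max 0 (min 1 ((1 - q/2) / (1 - q)))) at_top"
    using q by (intro tendsto_intros G_lim_top[OF b]) auto
  moreover have "max 0 (min 1 ((1 - q/2) / (1 - q))) = (1::real)"
  proof -
    have "(1 - q/2) / (1 - q) \<ge> 1" using q by (simp add: le_divide_eq)
    then show ?thesis by simp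
  qed
  ultimately show ?thesis unfolding FA A_def clip_def by simp
qed

lemma F_lim_bot: "(F b q \<longlongrightarrow> 0) at_bot"
proof -
  have "((\<lambda>t. max 0 (min 1 ((G b t - q/2) / (1 - q)))) \<longlongrightarrow> max 0 (min 1 ((0 - q/2) / (1 - q)))) at_bot"
    using q by (intro tendsto_intros G_lim_bot[OF b]) auto
  moreover have "max 0 (min 1 ((0 - q/2) / (1 - q))) = (0::real)"
  proof -
    have "(0 - q/2) / (1 - q) \<le> 0" using q by (simp add: divide_le_0_iff)
    then show ?thesis by simp
  qed
  ultimately show ?thesis unfolding FA A_def clip_def by simp
qed

lemma min_affine: "c > 0 \<Longrightarrow> (min x y - a) / c = min ((x - a) / c) ((y - a) / (c::real))"
  by (auto simp: min_def divide_le_cancel)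

lemma alg1: "b \<noteq> 0 \<Longrightarrow> (r::real) \<noteq> 0 \<Longrightarrow> (g/b - q/2)/r = (g - q/2)/r/b + q*(1-b)/(2*b*r)"
  by (simp add: field_simps)

lemma A_step: "A (t + 1) = min (A t / b + dl) (1 - b * (1 - A t - dl))"
proof -
  have "A (t + 1) = min ((G b t / b - q/2) / (1 - q)) ((1 - b * (1 - G b t) - q/2) / (1 - q))"
    unfolding A_def G_step[OF b] using q by (intro min_affine) auto
  moreover have "(G b t / b - q/2) / (1 - q) = A t / b + dl"
    unfolding A_def dl_def using b q by (intro alg1) auto
  moreover have "(1 - b * (1 - G b t) - q/2) / (1 - q) = 1 - b * (1 - A t - dl)"
    unfolding A_def dl_def using alg2[of b "1 - q" "G b t"] b q by simp
  ultimately show ?thesis by simp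
qed

lemma clip_ge1: "x \<ge> 1 \<Longrightarrow> clip x = 1" unfolding clip_def by simp
lemma clip_nonneg: "x \<ge> 0 \<Longrightarrow> clip x = min 1 x" unfolding clip_def by simp
lemma clip_le0: "x \<le> 0 \<Longrightarrow> clip x = 0" unfolding clip_def by simp

lemma clip_step:
  fixes a d :: real
  assumes d: "d \<ge> 0"
  shows "clip (min (a / b + d) (1 - b * (1 - a - d))) \<le> min 1 (min (clip a / b + d) (1 - b * (1 - clip a - d)))"
    and "clip a > 0 \<Longrightarrow> clip (min (a / b + d) (1 - b * (1 - a - d))) = min 1 (min (clip a / b + d) (1 - b * (1 - clip a - d)))"
proof -
  have bd: "b * d \<ge> 0" using b d by simp
  consider "a \<le> 0" | "0 < a" "a \<le> 1" | "a > 1" by linarith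
  then have "(clip (min (a / b + d) (1 - b * (1 - a - d))) \<le> min 1 (min (clip a / b + d) (1 - b * (1 - clip a - d))))
    \<and> (clip a > 0 \<longrightarrow> clip (min (a / b + d) (1 - b * (1 - a - d))) = min 1 (min (clip a / b + d) (1 - b * (1 - clip a - d))))"
  proof cases
    case 1
    have c: "clip a = 0" using 1 by (rule clip_le0)
    have "a / b \<le> 0" using 1 b by (simp add: divide_le_0_iff)
    moreover have "b * a \<le> 0" using 1 b by (simp add: mult_nonneg_nonpos)
    ultimately have "min (a / b + d) (1 - b * (1 - a - d)) \<le> min d (1 - b * (1 - d))"
      by (auto simp: algebra_simps min_def)
    then have "clip (min (a / b + d) (1 - b * (1 - a - d))) \<le> clip (min d (1 - b * (1 - d)))"
      by (rule clip_mono)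
    moreover have "1 - b * (1 - d) \<ge> 0"
    proof -
      have "b * (1 - d) \<le> b * 1" using b d by (intro mult_left_mono) auto
      then show ?thesis using b by linarith
    qed
    then have "clip (min d (1 - b * (1 - d))) = min 1 (min d (1 - b * (1 - d)))"
      using d by (intro clip_nonneg) simp
    ultimately show ?thesis unfolding c by simp
  next
    case 2
    have c: "clip a = a" using 2 unfolding clip_def by simp
    have "a / b \<ge> 0" using 2 b by simp
    moreover have "1 - b * (1 - a - d) \<ge> 0"
    proof -
      have "b * (1 - a - d) \<le> b * 1" using b 2 d by (intro mult_left_mono) auto
      then show ?thesis using b by linarith
    qed
    ultimately have "clip (min (a / b + d) (1 - b * (1 - a - d))) = min 1 (min (a / b + d) (1 - b * (1 - a - d)))"
      using d by (intro clip_nonneg) simp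
    then show ?thesis unfolding c by simp
  next
    case 3
    have c: "clip a = 1" using 3 by (intro clip_ge1) simp
    have "a / b > 1" using 3 b by (simp add: less_divide_eq)
    moreover have "b * a > b" using 3 b by simp
    ultimately have "min (a / b + d) (1 - b * (1 - a - d)) \<ge> 1" using d bd by (simp add: algebra_simps)
    then have l: "clip (min (a / b + d) (1 - b * (1 - a - d))) = 1" by (rule clip_ge1)
    have "1 / b > 1" using b by simp
    then have "min 1 (min (1 / b + d) (1 - b * (1 - 1 - d))) = 1" using d bd by simp
    then show ?thesis unfolding c l by simp
  qed
  then show "clip (min (a / b + d) (1 - b * (1 - a - d))) \<le> min 1 (min (clip a / b + d) (1 - b * (1 - clip a - d)))"
    and "clip a > 0 \<Longrightarrow> clip (min (a / b + d) (1 - b * (1 - a - d))) = min 1 (min (clip a / b + d) (1 - b * (1 - clip a - d)))"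
    by auto
qed

lemma F_step_le: "F b q (t + 1) \<le> min 1 (min (F b q t / b + dl) (1 - b * (1 - F b q t - dl)))"
  unfolding FA A_step using clip_step(1)[OF dl_nonneg] .

lemma F_step_eq: "F b q t > 0 \<Longrightarrow> F b q (t + 1) = min 1 (min (F b q t / b + dl) (1 - b * (1 - F b q t - dl)))"
  unfolding FA A_step using clip_step(2)[OF dl_nonneg] .

end


lemma sc_lemma:
  fixes d r :: "nat \<Rightarrow> real"
  assumes sc: "\<And>x y. x \<le> y \<Longrightarrow> y \<le> n \<Longrightarrow> d x > 0 \<Longrightarrow> d y \<ge> 0"
    and mono: "\<And>x y. x \<le> y \<Longrightarrow> y \<le> n \<Longrightarrow> r x \<le> r y"
    and rpos: "\<And>x. x \<le> n \<Longrightarrow> r x \<ge> 0"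
    and sum: "(\<Sum>x\<le>n. d x) \<ge> 0"
  shows "(\<Sum>x\<le>n. d x * r x) \<ge> 0"
proof -
  obtain R where R: "R \<ge> 0" "\<And>x. x \<le> n \<Longrightarrow> d x * r x \<ge> d x * R"
  proof (cases "\<exists>x. x \<le> n \<and> d x > 0")
    case True
    define x0 where "x0 = (LEAST x. x \<le> n \<and> d x > 0)"
    have x0: "x0 \<le> n \<and> d x0 > 0" unfolding x0_def by (rule LeastI_ex[OF True])
    have lt: "x < x0 \<Longrightarrow> \<not> (x \<le> n \<and> d x > 0)" for x unfolding x0_def by (rule not_less_Least)
    show thesis
    proof (rule that[of "r x0"])
      show "r x0 \<ge> 0" using rpos x0 by simp
      fix x assume x: "x \<le> n"
      show "d x * r x \<ge> d x * r x0"
      proof (cases "x < x0")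
        case True
        then have "d x \<le> 0" using lt x by force
        moreover have "r x \<le> r x0" using mono True x0 by simp
        ultimately show ?thesis by (simp add: mult_left_mono_neg)
      next
        case False
        then have "d x \<ge> 0" using sc[of x0 x] x x0 by simp
        moreover have "r x \<ge> r x0" using mono False x by simp
        ultimately show ?thesis by (simp add: mult_left_mono)
      qed
    qed
  next
    case False
    show thesis
    proof (rule that[of "r n"])
      show "r n \<ge> 0" using rpos by simp
      fix x assume x: "x \<le> n"
      have "d x \<le> 0" using False x by force
      moreover have "r x \<le> r n" using mono x by simp
      ultimately show "d x * r x \<ge> d x * r n" by (simp add: mult_left_mono_neg)
    qed
  qed
  have "(\<Sum>x\<le>n. d x * r x) \<ge> (\<Sum>x\<le>n. d x * R)" using R(2) by (intro sum_mono) auto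
  moreover have "(\<Sum>x\<le>n. d x * R) = R * (\<Sum>x\<le>n. d x)" by (simp add: sum_distrib_left mult.commute)
  moreover have "R * (\<Sum>x\<le>n. d x) \<ge> 0" using R(1) sum by simp
  ultimately show ?thesis by linarith
qed

definition bf :: "nat \<Rightarrow> real \<Rightarrow> nat \<Rightarrow> real" where
  "bf n t x = real (n choose x) * t ^ x * (1 - t) ^ (n - x)"

lemma bf_pmf: "0 \<le> t \<Longrightarrow> t \<le> 1 \<Longrightarrow> pmf (binomial_pmf n t) x = bf n t x"
  unfolding bf_def by simp

lemma bf_nonneg: "0 \<le> t \<Longrightarrow> t \<le> 1 \<Longrightarrow> bf n t x \<ge> 0"
  unfolding bf_def by simp

lemma bf_sum: "(\<Sum>x\<le>n. bf n t x) = 1"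
proof -
  have "(t + (1 - t)) ^ n = (\<Sum>x\<le>n. bf n t x)"
    unfolding binomial_ring bf_def atMost_atLeast0 by (simp add: mult.assoc)
  then show ?thesis by simp
qed

lemma bf_tp2:
  assumes t: "0 \<le> t" "t \<le> t'" "t' \<le> 1" and xy: "x \<le> y" "y \<le> n"
  shows "bf n t' x * bf n t y \<le> bf n t' y * bf n t x"
proof -
  obtain k where k: "y = x + k" using xy le_Suc_ex by blast
  have nx: "n - x = (n - y) + k" using xy k by simp
  define K where "K = real (n choose x) * real (n choose y) * t' ^ x * t ^ x * (1 - t') ^ (n - y) * (1 - t) ^ (n - y)"
  have K: "K \<ge> 0" unfolding K_def using t by simp
  have l: "bf n t' x * bf n t y = K * ((1 - t') ^ k * t ^ k)"
    unfolding bf_def K_def nx k by (simp add: power_add algebra_simps)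
  have r: "bf n t' y * bf n t x = K * (t' ^ k * (1 - t) ^ k)"
    unfolding bf_def K_def nx k by (simp add: power_add algebra_simps)
  have "(1 - t') * t \<le> t' * (1 - t)" using t by (simp add: algebra_simps)
  then have "((1 - t') * t) ^ k \<le> (t' * (1 - t)) ^ k" using t by (intro power_mono) auto
  then show ?thesis unfolding l r power_mult_distrib[symmetric] using K by (intro mult_left_mono) auto
qed

lemma level_mono:
  fixes \<psi> :: "nat \<Rightarrow> real"
  assumes t: "0 \<le> t" "t \<le> t0" "t0 \<le> 1"
    and mono: "\<And>x y. x \<le> y \<Longrightarrow> y \<le> n \<Longrightarrow> \<psi> x \<le> \<psi> y"
    and pos: "\<And>x. x \<le> n \<Longrightarrow> \<psi> x \<ge> 0"
  shows "(\<Sum>x\<le>n. bf n t x * \<psi> x) \<le> (\<Sum>x\<le>n. bf n t0 x * \<psi> x)"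
proof -
  define d where "d x = bf n t0 x - bf n t x" for x
  have "(\<Sum>x\<le>n. d x * \<psi> x) \<ge> 0"
  proof (rule sc_lemma[OF _ mono pos])
    show "(\<Sum>x\<le>n. d x) \<ge> 0" unfolding d_def sum_subtractf bf_sum by simp
    fix x y assume xy: "x \<le> y" "y \<le> n" and dx: "d x > 0"
    show "d y \<ge> 0"
    proof (rule ccontr)
      assume "\<not> d y \<ge> 0"
      then have a: "bf n t y > bf n t0 y" unfolding d_def by simp
      have b: "bf n t0 x > bf n t x" using dx unfolding d_def by simp
      have p1: "bf n t0 y \<ge> 0" "bf n t x \<ge> 0" using t by (auto intro!: bf_nonneg)
      have "bf n t y > 0" using a p1 by linarith
      then have "bf n t0 x * bf n t y > bf n t x * bf n t y" using b by simp
      moreover have "bf n t x * bf n t y \<ge> bf n t x * bf n t0 y" using a p1 by (intro mult_left_mono) auto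
      moreover have "bf n t0 x * bf n t y \<le> bf n t0 y * bf n t x" using bf_tp2[OF t(1) t(2) t(3) xy] .
      ultimately show False by (simp add: mult.commute)
    qed
  qed
  then show ?thesis unfolding d_def by (simp add: algebra_simps sum_subtractf)
qed

lemma ump_compare:
  fixes \<psi> \<phi> :: "nat \<Rightarrow> real"
  assumes t: "0 < t0" "t0 < t1" "t1 \<le> 1"
    and prp: "\<And>x y. x \<le> y \<Longrightarrow> y \<le> n \<Longrightarrow> \<phi> x < \<psi> x \<Longrightarrow> \<phi> y \<le> \<psi> y"
    and lev: "(\<Sum>x\<le>n. bf n t0 x * \<phi> x) \<le> (\<Sum>x\<le>n. bf n t0 x * \<psi> x)"
  shows "(\<Sum>x\<le>n. bf n t1 x * \<phi> x) \<le> (\<Sum>x\<le>n. bf n t1 x * \<psi> x)"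
proof -
  define r where "r x = (t1 / t0) ^ x * ((1 - t1) / (1 - t0)) ^ (n - x)" for x
  define d where "d x = (\<psi> x - \<phi> x) * bf n t0 x" for x
  have t0': "t0 < 1" using t by simp
  have f1: "bf n t1 x = bf n t0 x * r x" if "x \<le> n" for x
  proof -
    have p1: "t0 ^ x * (t1 / t0) ^ x = t1 ^ x" using t by (simp add: power_mult_distrib[symmetric])
    have p2: "(1 - t0) ^ (n - x) * ((1 - t1) / (1 - t0)) ^ (n - x) = (1 - t1) ^ (n - x)"
      using t0' by (simp add: power_mult_distrib[symmetric])
    have "bf n t0 x * r x = real (n choose x) * (t0 ^ x * (t1 / t0) ^ x) * ((1 - t0) ^ (n - x) * ((1 - t1) / (1 - t0)) ^ (n - x))"
      unfolding bf_def r_def by (simp only: ac_simps)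
    also have "\<dots> = real (n choose x) * t1 ^ x * (1 - t1) ^ (n - x)"
      unfolding p1 p2 ..
    also have "\<dots> = bf n t1 x" unfolding bf_def ..
    finally show ?thesis by simp
  qed
  have "(\<Sum>x\<le>n. d x * r x) \<ge> 0"
  proof (rule sc_lemma)
    show "(\<Sum>x\<le>n. d x) \<ge> 0" using lev unfolding d_def by (simp add: algebra_simps sum_subtractf)
    show "r x \<ge> 0" for x unfolding r_def using t by simp
    show "r x \<le> r y" if "x \<le> y" "y \<le> n" for x y
    proof -
      have a: "(t1 / t0) ^ x \<le> (t1 / t0) ^ y" using t that by (intro power_increasing) auto
      have c: "((1 - t1) / (1 - t0)) ^ (n - x) \<le> ((1 - t1) / (1 - t0)) ^ (n - y)"
        using t that t0' by (intro power_decreasing) (auto simp: divide_le_eq_1)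
      show ?thesis unfolding r_def using t t0' a c by (intro mult_mono) auto
    qed
    show "d y \<ge> 0" if "x \<le> y" "y \<le> n" "d x > 0" for x y
    proof -
      have "bf n t0 x \<ge> 0" using t by (intro bf_nonneg) auto
      have "\<phi> x < \<psi> x"
      proof (rule ccontr)
        assume "\<not> \<phi> x < \<psi> x"
        then have "\<psi> x - \<phi> x \<le> 0" by simp
        then have "d x \<le> 0" unfolding d_def using \<open>bf n t0 x \<ge> 0\<close> by (simp add: mult_nonpos_nonneg)
        then show False using that(3) by simp
      qed
      then have "\<phi> y \<le> \<psi> y" using prp that by blast
      moreover have "bf n t0 y \<ge> 0" using t by (intro bf_nonneg) auto
      ultimately show ?thesis unfolding d_def by simp
    qed
  qed
  moreover have "(\<Sum>x\<le>n. d x * r x) = (\<Sum>x\<le>n. bf n t1 x * \<psi> x) - (\<Sum>x\<le>n. bf n t1 x * \<phi> x)"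
    unfolding sum_subtractf[symmetric] by (rule sum.cong) (auto simp: d_def f1 algebra_simps)
  ultimately show ?thesis by simp
qed


locale tulF =
  fixes b q :: real
  assumes F_mono: "\<And>s t. s \<le> t \<Longrightarrow> F b q s \<le> F b q t"
    and F_cont: "continuous_on UNIV (F b q)"
    and F_lim_bot: "(F b q \<longlongrightarrow> 0) at_bot"
    and F_lim_top: "(F b q \<longlongrightarrow> 1) at_top"
    and F_sym: "\<And>t. F b q (-t) = 1 - F b q t"
    and F_range: "\<And>t. 0 \<le> F b q t" "\<And>t. F b q t \<le> 1"


lemma cdf_measure_facts:
  fixes H :: "real \<Rightarrow> real"
  assumes mono: "\<And>x y. x \<le> y \<Longrightarrow> H x \<le> H y" and cont: "continuous_on UNIV H"
    and bot: "(H \<longlongrightarrow> 0) at_bot" and top: "(H \<longlongrightarrow> 1) at_top"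
  shows "prob_space (interval_measure H)"
    and "measure (interval_measure H) {c..} = 1 - H c"
proof -
  have rc: "continuous (at_right a) H" for a
    using cont by (simp add: continuous_on_eq_continuous_at continuous_at_imp_continuous_at_within)
  have rd: "real_distribution (interval_measure H)"
    by (rule real_distribution_interval_measure) (use mono rc bot top in auto)
  then interpret real_distribution "interval_measure H" .
  show "prob_space (interval_measure H)" by (rule prob_space_axioms)
  let ?M = "interval_measure H"
  have Iic: "measure ?M {..c} = H c"
    by (rule measure_interval_measure_Iic) (use mono rc bot in auto)
  have "emeasure ?M {c..c} = H c - H c"
    by (rule emeasure_interval_measure_Icc) (use mono cont in auto)
  then have null: "{c} \<in> null_sets ?M" by (simp add: null_sets_def)
  have "{c<..} = space ?M - {..c}" by auto
  then have "measure ?M {c<..} = 1 - H c"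
    using prob_compl[of "{..c}"] Iic by simp
  moreover have "{c..} = {c<..} \<union> {c}" by auto
  ultimately show "measure ?M {c..} = 1 - H c"
    using measure_Un_null_set[OF _ null, of "{c<..}"] by simp
qed

lemma sets_tulap[simp]: "sets (tulap_measure m b q) = sets borel"
  unfolding tulap_measure_def by simp

context tulF
begin

lemma F_shift_facts:
  shows "prob_space (tulap_measure (real j) b q)"
    and "measure (tulap_measure (real j) b q) {c..} = F b q (real j - c)"
proof -
  have eq: "tulap_measure (real j) b q = interval_measure (\<lambda>x. F b q (x - real j))"
    unfolding tulap_measure_def tulap_shift ..
  have mono: "x \<le> y \<Longrightarrow> F b q (x - real j) \<le> F b q (y - real j)" for x y
    by (intro F_mono) simp
  have cont: "continuous_on UNIV (\<lambda>x. F b q (x - real j))"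
    by (rule continuous_on_compose2[OF F_cont]) (auto intro!: continuous_intros)
  have bot: "((\<lambda>x. F b q (x - real j)) \<longlongrightarrow> 0) at_bot"
    by (rule filterlim_compose[OF F_lim_bot]) real_asymp
  have top: "((\<lambda>x. F b q (x - real j)) \<longlongrightarrow> 1) at_top"
    by (rule filterlim_compose[OF F_lim_top]) real_asymp
  note f = cdf_measure_facts[OF mono cont bot top]
  show "prob_space (tulap_measure (real j) b q)" unfolding eq by (rule f(1))
  have "measure (tulap_measure (real j) b q) {c..} = 1 - F b q (c - real j)"
    unfolding eq by (rule f(2))
  also have "\<dots> = F b q (real j - c)" using F_sym[of "c - real j"] by simp
  finally show "measure (tulap_measure (real j) b q) {c..} = F b q (real j - c)" .
qed

lemma T0_facts:
  shows "prob_space (tulap_measure 0 b q)"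
    and "measure (tulap_measure 0 b q) {c..} = F b q (- c)"
  using F_shift_facts[of 0] by auto

lemma pvalue_formula:
  assumes th: "0 < th" "th < 1"
  shows "tulap_pvalue n th b q z = (\<Sum>x\<le>n. F b q (real x - z) * pmf (binomial_pmf n th) x)"
proof -
  let ?P = "measure_pmf (binomial_pmf n th)"
  let ?N = "tulap_measure 0 b q"
  let ?X = "{(x, t). z \<le> real x + t} :: (nat \<times> real) set"
  interpret N: prob_space ?N by (rule T0_facts(1))
  have X: "?X = (\<Union>x. {x} \<times> {z - real x..})"
  proof (rule set_eqI)
    fix p :: "nat \<times> real"
    show "p \<in> ?X \<longleftrightarrow> p \<in> (\<Union>x. {x} \<times> {z - real x..})"
      by (cases p) auto
  qed
  have R: "{x} \<times> {z - real x..} \<in> sets (?P \<Otimes>\<^sub>M ?N)" for x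
    by (rule pair_measureI) auto
  have Xs: "?X \<in> sets (?P \<Otimes>\<^sub>M ?N)"
    unfolding X by (rule sets.countable_UN'') (use R in auto)
  have "emeasure (?P \<Otimes>\<^sub>M ?N) ?X = (\<integral>\<^sup>+x. emeasure ?N (Pair x -` ?X) \<partial>?P)"
    by (rule N.emeasure_pair_measure_alt[OF Xs])
  also have "\<dots> = (\<integral>\<^sup>+x. ennreal (F b q (real x - z)) \<partial>?P)"
  proof (rule nn_integral_cong)
    fix x
    have "Pair x -` ?X = {z - real x..}" by auto
    then show "emeasure ?N (Pair x -` ?X) = ennreal (F b q (real x - z))"
      using T0_facts(2)[of "z - real x"] N.emeasure_eq_measure by simp
  qed
  also have "\<dots> = (\<Sum>x\<le>n. ennreal (F b q (real x - z)) * pmf (binomial_pmf n th) x)"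
  proof -
    have "(\<integral>\<^sup>+x. ennreal (F b q (real x - z)) \<partial>?P) = (\<Sum>x\<in>set_pmf (binomial_pmf n th). ennreal (F b q (real x - z)) * pmf (binomial_pmf n th) x)"
      by (rule nn_integral_measure_pmf_finite) (use th in auto)
    moreover have "set_pmf (binomial_pmf n th) = {..n}" using th by simp
    ultimately show ?thesis by simp
  qed
  also have "\<dots> = ennreal (\<Sum>x\<le>n. F b q (real x - z) * pmf (binomial_pmf n th) x)"
    using F_range by (simp add: ennreal_mult[symmetric] sum_ennreal)
  finally have e: "emeasure (?P \<Otimes>\<^sub>M ?N) ?X = ennreal (\<Sum>x\<le>n. F b q (real x - z) * pmf (binomial_pmf n th) x)" .
  have "(\<Sum>x\<le>n. F b q (real x - z) * pmf (binomial_pmf n th) x) \<ge> 0"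
    using F_range by (intro sum_nonneg mult_nonneg_nonneg) auto
  then show ?thesis unfolding tulap_pvalue_def measure_def e by simp
qed

lemma pvalue_range: "0 \<le> tulap_pvalue n th b q z \<and> tulap_pvalue n th b q z \<le> 1"
proof -
  interpret prob_space "measure_pmf (binomial_pmf n th) \<Otimes>\<^sub>M tulap_measure 0 b q"
    by (intro prob_space_pair T0_facts(1) prob_space_measure_pmf)
  show ?thesis unfolding tulap_pvalue_def by simp
qed

end


locale tulM = tulF +
  fixes dl :: real
  assumes b01: "0 < b" "b < 1" and dl_nonneg: "dl \<ge> 0"
    and step_le: "\<And>t. F b q (t + 1) \<le> min 1 (min (F b q t / b + dl) (1 - b * (1 - F b q t - dl)))"
    and step_eq: "\<And>t. F b q t > 0 \<Longrightarrow> F b q (t + 1) = min 1 (min (F b q t / b + dl) (1 - b * (1 - F b q t - dl)))"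
begin

definition pp :: "nat \<Rightarrow> real \<Rightarrow> real \<Rightarrow> real" where
  "pp n t0 z = (\<Sum>x\<le>n. F b q (real x - z) * bf n t0 x)"

lemma F_isCont: "isCont (F b q) t"
  using F_cont by (simp add: continuous_on_eq_continuous_at)

lemma pp_eq:
  assumes "0 < t0" "t0 < 1"
  shows "tulap_pvalue n t0 b q z = pp n t0 z"
  unfolding pvalue_formula[OF assms] pp_def using assms by (simp add: bf_def)

lemma pp_cont: "continuous_on UNIV (pp n t0)"
proof -
  have "isCont (pp n t0) z" for z
    unfolding pp_def by (intro continuous_intros isCont_o2[OF _ F_isCont]) 
  then show ?thesis by (simp add: continuous_on_eq_continuous_at)
qed

lemma pp_mono:
  assumes "0 \<le> t0" "t0 \<le> 1" "z1 \<le> z2"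
  shows "pp n t0 z2 \<le> pp n t0 z1"
  unfolding pp_def using assms bf_nonneg
  by (intro sum_mono mult_right_mono F_mono) auto

lemma pp_bot: "(pp n t0 \<longlongrightarrow> 1) at_bot"
proof -
  have "((\<lambda>z. \<Sum>x\<le>n. F b q (real x - z) * bf n t0 x) \<longlongrightarrow> (\<Sum>x\<le>n. 1 * bf n t0 x)) at_bot"
  proof (intro tendsto_sum tendsto_mult_right)
    fix x
    show "((\<lambda>z. F b q (real x - z)) \<longlongrightarrow> 1) at_bot"
      by (rule filterlim_compose[OF F_lim_top]) real_asymp
  qed
  then show ?thesis unfolding pp_def by (simp add: bf_sum)
qed

lemma pp_top: "(pp n t0 \<longlongrightarrow> 0) at_top"
proof -
  have "((\<lambda>z. \<Sum>x\<le>n. F b q (real x - z) * bf n t0 x) \<longlongrightarrow> (\<Sum>x\<le>n. 0 * bf n t0 x)) at_top"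
  proof (intro tendsto_sum tendsto_mult_right)
    fix x
    show "((\<lambda>z. F b q (real x - z)) \<longlongrightarrow> 0) at_top"
      by (rule filterlim_compose[OF F_lim_bot]) real_asymp
  qed
  then show ?thesis unfolding pp_def by simp
qed

lemma thresh:
  assumes t: "0 < t0" "t0 < 1" and a: "0 < \<alpha>" "\<alpha> < 1"
  shows "\<exists>c. {z. pp n t0 z \<le> \<alpha>} = {c..} \<and> pp n t0 c = \<alpha>"
proof -
  let ?p = "pp n t0"
  have "\<forall>\<^sub>F z in at_bot. ?p z > \<alpha>" using pp_bot a by (intro order_tendstoD(1)) auto
  then obtain Z1 where Z1: "\<And>z. z \<le> Z1 \<Longrightarrow> ?p z > \<alpha>" by (auto simp: eventually_at_bot_linorder)
  have "\<forall>\<^sub>F z in at_top. ?p z < \<alpha>" using pp_top a by (intro order_tendstoD(2)) auto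
  then obtain Z2 where Z2: "\<And>z. z \<ge> Z2 \<Longrightarrow> ?p z < \<alpha>" by (auto simp: eventually_at_top_linorder)
  define zl where "zl = min Z1 Z2"
  define zh where "zh = max Z1 Z2"
  have zlh: "zl \<le> zh" "?p zl > \<alpha>" "?p zh < \<alpha>" unfolding zl_def zh_def using Z1 Z2 by auto
  define S where "S = {z. ?p z \<le> \<alpha>}"
  have cl: "closed S" unfolding S_def
    by (rule closed_Collect_le) (use pp_cont in auto)
  have "zh \<in> S" using zlh unfolding S_def by simp
  then have ne: "S \<noteq> {}" by blast
  have bdd: "bdd_below S"
  proof
    fix z assume "z \<in> S"
    then have "?p z \<le> \<alpha>" unfolding S_def by simp
    show "zl \<le> z"
    proof (rule ccontr)
      assume "\<not> zl \<le> z"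
      then have "z \<le> Z1" unfolding zl_def by simp
      then have "?p z > \<alpha>" by (rule Z1)
      then show False using \<open>?p z \<le> \<alpha>\<close> by simp
    qed
  qed
  define c where "c = Inf S"
  have cS: "c \<in> S" unfolding c_def using closed_contains_Inf[OF ne bdd cl] .
  have Seq: "S = {c..}"
  proof
    show "S \<subseteq> {c..}" using cInf_lower[OF _ bdd] unfolding c_def by auto
    show "{c..} \<subseteq> S"
    proof
      fix z assume "z \<in> {c..}"
      then have "?p z \<le> ?p c" using pp_mono t by simp
      then show "z \<in> S" using cS unfolding S_def by simp
    qed
  qed
  have "\<exists>x. zl \<le> x \<and> x \<le> zh \<and> ?p x = \<alpha>"
  proof (rule IVT2)
    show "?p zh \<le> \<alpha>" "\<alpha> \<le> ?p zl" "zl \<le> zh" using zlh by auto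
    show "\<forall>x. zl \<le> x \<and> x \<le> zh \<longrightarrow> isCont ?p x"
      using pp_cont by (simp add: continuous_on_eq_continuous_at)
  qed
  then obtain c' where c': "?p c' = \<alpha>" by blast
  then have "c' \<in> S" unfolding S_def by simp
  then have "c \<le> c'" using Seq by simp
  then have "?p c' \<le> ?p c" using t by (intro pp_mono) auto
  then have "?p c \<ge> \<alpha>" using c' by simp
  moreover have "?p c \<le> \<alpha>" using cS unfolding S_def by simp
  ultimately show ?thesis using Seq unfolding S_def by auto
qed

lemma test_eq:
  "measure (tulap_measure (real x) b q) {c..} = F b q (real x - c)"
  by (rule F_shift_facts(2))

lemma psi_mono: "x \<le> y \<Longrightarrow> F b q (real x - c) \<le> F b q (real y - c)"
  by (intro F_mono) simp

lemma psi_DP_step: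
  fixes x :: nat and c :: real
  assumes e: "exp \<epsilon> = 1 / b" and dl: "dl = \<delta>"
  defines "u \<equiv> F b q (real x - c)" and "v \<equiv> F b q (real (x+1) - c)"
  shows "u \<le> exp \<epsilon> * v + \<delta> \<and> v \<le> exp \<epsilon> * u + \<delta> \<and>
      1 - u \<le> exp \<epsilon> * (1 - v) + \<delta> \<and> 1 - v \<le> exp \<epsilon> * (1 - u) + \<delta>"
proof -
  have uv: "u \<le> v" unfolding u_def v_def by (rule psi_mono) simp
  have r: "0 \<le> u" "u \<le> 1" "0 \<le> v" "v \<le> 1" unfolding u_def v_def using F_range by auto
  have st: "v \<le> min 1 (min (u / b + dl) (1 - b * (1 - u - dl)))"
    unfolding u_def v_def using step_le[of "real x - c"] by (simp add: algebra_simps)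
  have e1: "exp \<epsilon> \<ge> 1" using e b01 by simp
  have "u \<le> exp \<epsilon> * v + \<delta>"
  proof -
    have "v \<le> exp \<epsilon> * v" using e1 r by (simp add: mult_le_cancel_right1)
    then show ?thesis using uv dl dl_nonneg by linarith
  qed
  moreover have "v \<le> exp \<epsilon> * u + \<delta>" using st e dl by simp
  moreover have "1 - u \<le> exp \<epsilon> * (1 - v) + \<delta>"
  proof -
    have "b * (1 - u - dl) \<le> 1 - v" using st by simp
    then have "(1 - u - dl) \<le> (1 - v) / b" using b01 by (simp add: le_divide_eq mult.commute)
    then show ?thesis using e dl by simp
  qed
  moreover have "1 - v \<le> exp \<epsilon> * (1 - u) + \<delta>"
  proof -
    have "1 - u \<le> exp \<epsilon> * (1 - u)" using e1 r by (simp add: mult_le_cancel_right1)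
    then show ?thesis using uv dl dl_nonneg by linarith
  qed
  ultimately show ?thesis by simp
qed

lemma psi_DP:
  assumes e: "exp \<epsilon> = 1 / b" and dl: "dl = \<delta>"
  shows "(\<lambda>x. F b q (real x - c)) \<in> DP_tests n \<epsilon> \<delta>"
  unfolding DP_tests_def is_test_def using F_range psi_DP_step[OF e dl] by auto

lemma propagate:
  assumes e: "exp \<epsilon> = 1 / b" and dl: "dl = \<delta>" and phi: "\<phi> \<in> DP_tests n \<epsilon> \<delta>"
    and xy: "x \<le> y" "y \<le> n" and lt: "\<phi> x < F b q (real x - c)"
  shows "\<phi> y \<le> F b q (real y - c)"
proof -
  have ph: "\<And>x. x \<le> n \<Longrightarrow> 0 \<le> \<phi> x \<and> \<phi> x \<le> 1" using phi unfolding DP_tests_def is_test_def by auto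
  have dp: "\<And>x. x < n \<Longrightarrow> \<phi> (x+1) \<le> exp \<epsilon> * \<phi> x + \<delta> \<and> 1 - \<phi> x \<le> exp \<epsilon> * (1 - \<phi> (x+1)) + \<delta>"
    using phi unfolding DP_tests_def by auto
  have xn: "x \<le> n" using xy by simp
  have pos: "F b q (real x - c) > 0" using lt ph[OF xn] by linarith
  have "\<forall>k. x + k \<le> n \<longrightarrow> \<phi> (x + k) \<le> F b q (real (x + k) - c)"
  proof
    fix k show "x + k \<le> n \<longrightarrow> \<phi> (x + k) \<le> F b q (real (x + k) - c)"
    proof (induction k)
      case 0 show ?case using lt by simp
    next
      case (Suc k)
      show ?case
      proof
        assume kn: "x + Suc k \<le> n"
        define y where "y = x + k"
        have yn: "y < n" using kn y_def by simp
        have ih: "\<phi> y \<le> F b q (real y - c)" using Suc kn y_def by simp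
        define u where "u = F b q (real y - c)"
        have upos: "u > 0" using pos psi_mono[of x y c] unfolding u_def y_def by simp
        have st: "F b q (real y - c + 1) = min 1 (min (u / b + dl) (1 - b * (1 - u - dl)))"
          unfolding u_def by (rule step_eq) (use upos u_def in simp)
        have a1: "\<phi> (y+1) \<le> 1" using ph yn by simp
        have a2: "\<phi> (y+1) \<le> u / b + dl"
        proof -
          have "\<phi> (y+1) \<le> \<phi> y / b + dl" using dp[OF yn] e dl by simp
          moreover have "\<phi> y / b \<le> u / b" using ih b01 unfolding u_def by (simp add: divide_right_mono)
          ultimately show ?thesis by linarith
        qed
        have a3: "\<phi> (y+1) \<le> 1 - b * (1 - u - dl)"
        proof -
          have "1 - \<phi> y \<le> (1 - \<phi> (y+1)) / b + dl" using dp[OF yn] e dl by simp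
          then have "1 - \<phi> y - dl \<le> (1 - \<phi> (y+1)) / b" by linarith
          then have "(1 - \<phi> y - dl) * b \<le> 1 - \<phi> (y+1)" using b01 by (simp add: le_divide_eq)
          moreover have "b * (1 - u - dl) \<le> b * (1 - \<phi> y - dl)" using ih b01 unfolding u_def
            by (intro mult_left_mono) auto
          ultimately show ?thesis by (simp add: mult.commute)
        qed
        have eq1: "x + Suc k = y + 1" by (simp add: y_def)
        have arg: "real (y+1) - c = real y - c + 1" by simp
        show "\<phi> (x + Suc k) \<le> F b q (real (x + Suc k) - c)"
          unfolding eq1 arg st using a1 a2 a3 by simp
      qed
    qed
  qed
  moreover obtain k where "y = x + k" using xy le_Suc_ex by blast
  ultimately show ?thesis using xy by simp
qed

end


context tulM
begin

lemma main_alpha: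
  assumes t: "0 < t0" "t0 < 1" and a: "0 < \<alpha>" "\<alpha> < 1"
    and e: "exp \<epsilon> = 1 / b" and dl: "dl = \<delta>"
  shows "(\<forall>\<theta>\<in>{0..t0}. Z_prob n \<theta> b q {z. tulap_pvalue n t0 b q z \<le> \<alpha>} \<le> \<alpha>) \<and>
    is_UMP n {0..t0} {t0<..1} \<alpha> (DP_tests n \<epsilon> \<delta>)
      (\<lambda>x. measure (tulap_measure (real x) b q) {z. tulap_pvalue n t0 b q z \<le> \<alpha>})"
proof -
  obtain c where c: "{z. pp n t0 z \<le> \<alpha>} = {c..}" "pp n t0 c = \<alpha>"
    using thresh[OF t a] by blast
  have Seq: "{z. tulap_pvalue n t0 b q z \<le> \<alpha>} = {c..}"
    using c(1) pp_eq[OF t] by simp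
  define \<psi> where "\<psi> x = F b q (real x - c)" for x :: nat
  have psi: "(\<lambda>x. measure (tulap_measure (real x) b q) {z. tulap_pvalue n t0 b q z \<le> \<alpha>}) = \<psi>"
    unfolding Seq \<psi>_def test_eq ..
  have pw: "power n \<theta> \<phi> = (\<Sum>x\<le>n. bf n \<theta> x * \<phi> x)" if "0 \<le> \<theta>" "\<theta> \<le> 1" for \<theta> \<phi>
    unfolding power_def using that by (simp add: bf_def)
  have pw0: "power n t0 \<psi> = \<alpha>"
    unfolding pw[OF less_imp_le[OF t(1)] less_imp_le[OF t(2)]] c(2)[symmetric] pp_def \<psi>_def
    by (simp add: mult.commute)
  have lev: "power n \<theta> \<psi> \<le> \<alpha>" if "\<theta> \<in> {0..t0}" for \<theta>
  proof -
    have "power n \<theta> \<psi> = (\<Sum>x\<le>n. bf n \<theta> x * \<psi> x)" using that t by (intro pw) auto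
    also have "\<dots> \<le> (\<Sum>x\<le>n. bf n t0 x * \<psi> x)"
      by (rule level_mono) (use that t in \<open>auto simp: \<psi>_def psi_mono F_range\<close>)
    also have "\<dots> = \<alpha>" using pw0 pw[of t0 \<psi>] t by simp
    finally show ?thesis .
  qed
  have Z: "Z_prob n \<theta> b q {z. tulap_pvalue n t0 b q z \<le> \<alpha>} = power n \<theta> \<psi>" for \<theta>
    unfolding Z_prob_def power_def Seq test_eq \<psi>_def ..
  have ump: "power n \<theta>1 \<psi> \<ge> power n \<theta>1 \<phi>"
    if phi: "\<phi> \<in> DP_tests n \<epsilon> \<delta>" and phl: "\<forall>\<theta>\<in>{0..t0}. power n \<theta> \<phi> \<le> \<alpha>" and th1: "\<theta>1 \<in> {t0<..1}"
    for \<phi> \<theta>1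
  proof -
    have "(\<Sum>x\<le>n. bf n \<theta>1 x * \<phi> x) \<le> (\<Sum>x\<le>n. bf n \<theta>1 x * \<psi> x)"
    proof (rule ump_compare)
      show "0 < t0" "t0 < \<theta>1" "\<theta>1 \<le> 1" using t th1 by auto
      show "\<phi> y \<le> \<psi> y" if "x \<le> y" "y \<le> n" "\<phi> x < \<psi> x" for x y
        using propagate[OF e dl phi that(1,2)] that(3) unfolding \<psi>_def by blast
      have "power n t0 \<phi> \<le> \<alpha>" using phl t by auto
      then show "(\<Sum>x\<le>n. bf n t0 x * \<phi> x) \<le> (\<Sum>x\<le>n. bf n t0 x * \<psi> x)"
        using pw0 pw[of t0] t by simp
    qed
    then show ?thesis using pw[of \<theta>1] th1 t by simp
  qed
  have DP: "\<psi> \<in> DP_tests n \<epsilon> \<delta>" unfolding \<psi>_def by (rule psi_DP[OF e dl])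
  show ?thesis
    unfolding psi is_UMP_def Z using lev ump DP by blast
qed

end

theorem theorem5:
  fixes \<epsilon> \<delta> \<theta>0 b q :: real and n :: nat
  assumes "\<epsilon> > 0" and "\<delta> \<ge> 0" and "n \<ge> 1"
    and "0 < \<theta>0" and "\<theta>0 < 1"
    and "b = exp (- \<epsilon>)"
    and "q = 2 * \<delta> * b / (1 - b + 2 * \<delta> * b)"
  shows "is_pvalue n b q {0..\<theta>0} (tulap_pvalue n \<theta>0 b q)
    \<and> (\<forall>\<alpha>. 0 < \<alpha> \<and> \<alpha> < 1 \<longrightarrow>
           is_UMP n {0..\<theta>0} {\<theta>0<..1} \<alpha> (DP_tests n \<epsilon> \<delta>)
             (\<lambda>x. measure (tulap_measure (real x) b q) {z. tulap_pvalue n \<theta>0 b q z \<le> \<alpha>}))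
    \<and> (\<forall>z. tulap_pvalue n \<theta>0 b q z =
           (\<Sum>x\<le>n. tulap_cdf 0 b q (real x - z) * real (n choose x) * \<theta>0 ^ x * (1 - \<theta>0) ^ (n - x)))"
  proof -
  have b01: "0 < b" "b < 1" using assms(1,6) by auto
  have "exp \<epsilon> * b = 1" using assms(6) by (simp add: exp_minus)
  then have e: "exp \<epsilon> = 1 / b" using b01 by (simp add: eq_divide_eq)
  define D where "D = 1 - b + 2 * \<delta> * b"
  have bd: "2 * \<delta> * b \<ge> 0" using assms(2) b01 by simp
  have Dpos: "D > 0" unfolding D_def using b01 bd by linarith
  have qD: "q = 2 * \<delta> * b / D" unfolding D_def using assms(7) by simp
  have q0: "0 \<le> q" unfolding qD using bd Dpos by simp
  have "2 * \<delta> * b < D" unfolding D_def using b01 by simp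
  then have q1: "q < 1" unfolding qD using Dpos by (simp add: divide_less_eq)
  interpret T: tul b q by unfold_locales (use b01 q0 q1 in auto)
  have dl: "T.dl = \<delta>"
  proof -
    have "1 - q = (1 - b) / D" unfolding qD using Dpos by (simp add: field_simps D_def)
    then have "T.dl = q * (1 - b) / (2 * b * ((1 - b) / D))" unfolding T.dl_def by simp
    also have "\<dots> = q * D / (2 * b)" using b01 Dpos by (simp add: field_simps)
    also have "\<dots> = \<delta>" unfolding qD using b01 Dpos by (simp add: field_simps)
    finally show ?thesis .
  qed
  interpret M: tulM b q T.dl
    by unfold_locales (fact T.F_mono T.F_cont T.F_lim_bot T.F_lim_top T.F_sym T.F_range b01 T.dl_nonneg T.F_step_le T.F_step_eq)+
  have t: "0 < \<theta>0" "\<theta>0 < 1" using assms by auto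
  have t': "0 \<le> \<theta>0" "\<theta>0 \<le> 1" using t by auto
  have A: "\<forall>\<alpha>. 0 < \<alpha> \<and> \<alpha> < 1 \<longrightarrow>
    (\<forall>\<theta>\<in>{0..\<theta>0}. Z_prob n \<theta> b q {z. tulap_pvalue n \<theta>0 b q z \<le> \<alpha>} \<le> \<alpha>) \<and>
    is_UMP n {0..\<theta>0} {\<theta>0<..1} \<alpha> (DP_tests n \<epsilon> \<delta>)
      (\<lambda>x. measure (tulap_measure (real x) b q) {z. tulap_pvalue n \<theta>0 b q z \<le> \<alpha>})"
    using M.main_alpha[OF t _ _ e dl] by blast
  have C: "\<forall>z. tulap_pvalue n \<theta>0 b q z =
           (\<Sum>x\<le>n. tulap_cdf 0 b q (real x - z) * real (n choose x) * \<theta>0 ^ x * (1 - \<theta>0) ^ (n - x))"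
    using M.pvalue_formula[OF t] t' by (simp add: mult.assoc)
  have P: "is_pvalue n b q {0..\<theta>0} (tulap_pvalue n \<theta>0 b q)"
    unfolding is_pvalue_def using M.pvalue_range A by blast
  show ?thesis using P A C by blast
qed

end
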